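(* Let $p_0^{(k)},\dots,p_n^{(k)}\in\mathcal{P}$ be the preference densities of the $n+1$ agents at iteration $k$. Construct the densities at iteration $k+1$ sequentially for $i=0,1,\dots,n$, in that order, by $$p_i^{(k+1)}(f) = \frac{p_i^{(k)}(f)\exp\big(-\bar{\gamma}_i^{(k)}(f)\big)}{\int_{\mathcal{F}} p_i^{(k)}(g)\exp\big(-\bar{\gamma}_i^{(k)}(g)\big)\, dg},$$ where $$\bar{\gamma}_i^{(k)}(f) = \sum_{j=0}^{i-1} \int_{\mathcal{F}} \psi(f, g)\, p_j^{(k+1)}(g)\, dg + \sum_{j=i+1}^{n} \int_{\mathcal{F}} \psi(f, g)\, p_j^{(k)}(g)\, dg .$$ If $p_i^{(k+1)} \neq p_i^{(k)}$ for some $i\in\{0,\dots,n\}$, then there exists $\xi>0$ such that $$J_c\big(p_0^{(k+1)},\dots,p_n^{(k+1)}\big) \le J_c\big(p_0^{(k)},\dots,p_n^{(k)}\big) - \xi .$$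
   Context: Trajectory space: $\mathcal{F} \subseteq \mathbb{R}^{d\times T}$, where $d$ is the state dimension and $T$ is the number of time points. Distribution space: $\mathcal{P}$ is the set of probability density functions $p:\mathcal{F}\to[0,\infty)$ with $\int_{\mathcal{F}} p(f)\,df=1$. There are $n+1$ agents, indexed $0,1,\dots,n$ (index $0$ is the robot). The collision penalty function $\psi:\mathcal{F}\times\mathcal{F}\to[0,\infty)$ is symmetric, i.e. $\psi(f,g)=\psi(g,f)$. The expected collision penalty of two densities is $$c(p,q)=\int_{\mathcal{F}}\int_{\mathcal{F}}\psi(f,g)\,p(f)\,q(g)\,df\,dg,$$ and the joint expected collision penalty is $$J_c(p_0,\dots,p_n)=\sum_{i=0}^{n}\sum_{j=i+1}^{n} c(p_i,p_j).$$ *)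

theory Defs
  imports "HOL-Analysis.Analysis"
begin

text \<open>Trajectories live in a Lebesgue-measurable set F of a Euclidean space
  (instantiated below by d x T real matrices).\<close>

definition is_density :: "'a::euclidean_space set \<Rightarrow> ('a \<Rightarrow> real) \<Rightarrow> bool" where
  "is_density F p \<longleftrightarrow> p \<in> borel_measurable lborel \<and> (\<forall>f\<in>F. 0 \<le> p f)
      \<and> (\<integral>\<^sup>+f\<in>F. ennreal (p f) \<partial>lborel) = 1"

definition coll :: "('a::euclidean_space \<Rightarrow> 'a \<Rightarrow> real) \<Rightarrow> 'a set
    \<Rightarrow> ('a \<Rightarrow> real) \<Rightarrow> ('a \<Rightarrow> real) \<Rightarrow> ennreal" where
  "coll \<psi> F p q = (\<integral>\<^sup>+f\<in>F. (\<integral>\<^sup>+g\<in>F. ennreal (\<psi> f g * p f * q g) \<partial>lborel) \<partial>lborel)"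

definition Jc :: "('a::euclidean_space \<Rightarrow> 'a \<Rightarrow> real) \<Rightarrow> 'a set \<Rightarrow> nat
    \<Rightarrow> (nat \<Rightarrow> 'a \<Rightarrow> real) \<Rightarrow> ennreal" where
  "Jc \<psi> F n P = (\<Sum>i\<in>{0..n}. \<Sum>j\<in>{i+1..n}. coll \<psi> F (P i) (P j))"

definition gamma_bar :: "('a::euclidean_space \<Rightarrow> 'a \<Rightarrow> real) \<Rightarrow> 'a set \<Rightarrow> nat
    \<Rightarrow> (nat \<Rightarrow> 'a \<Rightarrow> real) \<Rightarrow> (nat \<Rightarrow> 'a \<Rightarrow> real) \<Rightarrow> nat \<Rightarrow> 'a \<Rightarrow> ennreal" where
  "gamma_bar \<psi> F n Pnew Pold i f =
     (\<Sum>j\<in>{0..<i}. \<integral>\<^sup>+g\<in>F. ennreal (\<psi> f g * Pnew j g) \<partial>lborel)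
   + (\<Sum>j\<in>{i+1..n}. \<integral>\<^sup>+g\<in>F. ennreal (\<psi> f g * Pold j g) \<partial>lborel)"

definition expneg :: "ennreal \<Rightarrow> ennreal" where
  "expneg x = (if x = \<infinity> then 0 else ennreal (exp (- enn2real x)))"

end

theory Submission
  imports Defs
begin


lemma expneg_meas[measurable]: "expneg \<in> borel_measurable borel"
  unfolding expneg_def by measurable

lemma expneg_le1: "expneg x \<le> 1"
  by (auto simp: expneg_def)

lemma expneg_pos: "x \<noteq> \<infinity> \<Longrightarrow> expneg x > 0"
  by (auto simp: expneg_def)

lemma expneg_ennreal: "0 \<le> c \<Longrightarrow> expneg (ennreal c) = ennreal (exp (- c))"
  by (auto simp: expneg_def)

lemma real_pw:
  fixes t c :: real
  shows "t * exp (-t) + c * exp (-c) \<le> c * exp (-t) + t * exp (-c)"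
    and "t \<noteq> c \<Longrightarrow> t * exp (-t) + c * exp (-c) < c * exp (-t) + t * exp (-c)"
proof -
  have e: "t * exp (-t) + c * exp (-c) - (c * exp (-t) + t * exp (-c)) = (t - c) * (exp (-t) - exp (-c))"
    by (simp add: algebra_simps)
  have "(t - c) * (exp (-t) - exp (-c)) \<le> 0"
    by (cases "t \<le> c") (auto simp: mult_nonneg_nonpos mult_nonpos_nonneg)
  then show "t * exp (-t) + c * exp (-c) \<le> c * exp (-t) + t * exp (-c)" using e by linarith
  show "t * exp (-t) + c * exp (-c) < c * exp (-t) + t * exp (-c)" if "t \<noteq> c"
  proof -
    have "(t - c) * (exp (-t) - exp (-c)) < 0"
      using that by (cases "t < c") (auto simp: mult_pos_neg mult_neg_pos)
    then show ?thesis using e by linarith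
  qed
qed

lemma pw:
  fixes x :: ennreal and c :: real
  assumes "0 \<le> c"
  shows "x * expneg x + ennreal c * expneg (ennreal c) \<le> ennreal c * expneg x + x * expneg (ennreal c)"
    and "x \<noteq> ennreal c \<Longrightarrow> x * expneg x + ennreal c * expneg (ennreal c) < ennreal c * expneg x + x * expneg (ennreal c)"
proof -
  have "x * expneg x + ennreal c * expneg (ennreal c) \<le> ennreal c * expneg x + x * expneg (ennreal c) \<and>
     (x \<noteq> ennreal c \<longrightarrow> x * expneg x + ennreal c * expneg (ennreal c) < ennreal c * expneg x + x * expneg (ennreal c))"
  proof (cases x)
    case (real t)
    then have t: "0 \<le> t" "x = ennreal t" by auto
    have a1: "x * expneg x = ennreal (t * exp (-t))" using t by (simp add: expneg_ennreal ennreal_mult)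
    have a2: "ennreal c * expneg (ennreal c) = ennreal (c * exp (-c))" using assms by (simp add: expneg_ennreal ennreal_mult)
    have a3: "ennreal c * expneg x = ennreal (c * exp (-t))" using t assms by (simp add: expneg_ennreal ennreal_mult)
    have a4: "x * expneg (ennreal c) = ennreal (t * exp (-c))" using t assms by (simp add: expneg_ennreal ennreal_mult)
    have h1: "x * expneg x + ennreal c * expneg (ennreal c) = ennreal (t * exp (-t) + c * exp (-c))"
      unfolding a1 a2 using t assms by (simp add: ennreal_plus)
    have h2: "ennreal c * expneg x + x * expneg (ennreal c) = ennreal (c * exp (-t) + t * exp (-c))"
      unfolding a3 a4 using t assms by (simp add: ennreal_plus)
    show ?thesis unfolding h1 h2
    proof (intro conjI impI)
      show "ennreal (t * exp (-t) + c * exp (-c)) \<le> ennreal (c * exp (-t) + t * exp (-c))"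
        by (rule ennreal_leI) (rule real_pw(1))
      assume "x \<noteq> ennreal c"
      then have tc: "t \<noteq> c" using t by auto
      have "0 \<le> t * exp (-t) + c * exp (-c)" using t assms by simp
      then have "0 < c * exp (-t) + t * exp (-c)" using real_pw(2)[OF tc] by linarith
      then show "ennreal (t * exp (-t) + c * exp (-c)) < ennreal (c * exp (-t) + t * exp (-c))"
        by (rule ennreal_lessI) (rule real_pw(2)[OF tc])
    qed
  next
    case top
    have "expneg (ennreal c) > 0" by (rule expneg_pos) simp
    then have "\<infinity> * expneg (ennreal c) = \<infinity>" by (simp add: ennreal_mult_eq_top_iff)
    moreover have "ennreal c * expneg (ennreal c) < \<infinity>" using assms by (simp add: expneg_ennreal ennreal_mult[symmetric])
    ultimately show ?thesis using top by (simp add: expneg_def)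
  qed
  then show "x * expneg x + ennreal c * expneg (ennreal c) \<le> ennreal c * expneg x + x * expneg (ennreal c)"
    and "x \<noteq> ennreal c \<Longrightarrow> x * expneg x + ennreal c * expneg (ennreal c) < ennreal c * expneg x + x * expneg (ennreal c)"
    by auto
qed



lemma descent:
  fixes M :: "'a measure" and p q :: "'a \<Rightarrow> real" and \<gamma> :: "'a \<Rightarrow> ennreal"
  assumes pm[measurable]: "p \<in> borel_measurable M" and gm[measurable]: "\<gamma> \<in> borel_measurable M"
    and pnn: "\<And>x. x \<in> space M \<Longrightarrow> 0 \<le> p x"
    and p1: "(\<integral>\<^sup>+x. ennreal (p x) \<partial>M) = 1"
    and Afin: "(\<integral>\<^sup>+x. ennreal (p x) * \<gamma> x \<partial>M) < \<infinity>"
    and qdef: "\<And>x. x \<in> space M \<Longrightarrow> q x = enn2real (ennreal (p x) * expneg (\<gamma> x)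
                   / (\<integral>\<^sup>+y. ennreal (p y) * expneg (\<gamma> y) \<partial>M))"
  shows "(\<integral>\<^sup>+x. ennreal (q x) * \<gamma> x \<partial>M) \<le> (\<integral>\<^sup>+x. ennreal (p x) * \<gamma> x \<partial>M)"
    and "\<not> (AE x in M. q x = p x) \<Longrightarrow>
         (\<integral>\<^sup>+x. ennreal (q x) * \<gamma> x \<partial>M) < (\<integral>\<^sup>+x. ennreal (p x) * \<gamma> x \<partial>M)"
proof -
  define A where "A = (\<integral>\<^sup>+x. ennreal (p x) * \<gamma> x \<partial>M)"
  define c where "c = enn2real A"
  define C where "C = ennreal c"
  have c0: "0 \<le> c" unfolding c_def by simp
  have AC: "A = C" unfolding C_def c_def using Afin A_def by simp
  define Z where "Z = (\<integral>\<^sup>+y. ennreal (p y) * expneg (\<gamma> y) \<partial>M)"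
  define X where "X = (\<integral>\<^sup>+x. ennreal (p x) * expneg (\<gamma> x) * \<gamma> x \<partial>M)"
  have Z1: "Z \<le> 1"
  proof -
    have "Z \<le> (\<integral>\<^sup>+y. ennreal (p y) \<partial>M)" unfolding Z_def
      by (intro nn_integral_mono) (metis expneg_le1 mult.right_neutral mult_left_mono zero_le)
    then show ?thesis using p1 by simp
  qed
  have Ztop: "Z \<noteq> \<infinity>" using Z1 by (auto simp: top_unique)
  have AEfin: "AE x in M. ennreal (p x) * \<gamma> x \<noteq> \<infinity>"
    using Afin by (intro nn_integral_PInf_AE) auto
  have Z0: "Z \<noteq> 0"
  proof
    assume "Z = 0"
    then have "AE x in M. ennreal (p x) * expneg (\<gamma> x) = 0"
      unfolding Z_def by (subst (asm) nn_integral_0_iff_AE) auto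
    then have "AE x in M. ennreal (p x) = 0"
      using AEfin
    proof eventually_elim
      case (elim x)
      show ?case
      proof (rule ccontr)
        assume "ennreal (p x) \<noteq> 0"
        then have "\<gamma> x \<noteq> \<infinity>" using elim(2) by (auto simp: ennreal_mult_eq_top_iff)
        then have "expneg (\<gamma> x) > 0" by (rule expneg_pos)
        then show False using elim(1) \<open>ennreal (p x) \<noteq> 0\<close> by simp
      qed
    qed
    then have "(\<integral>\<^sup>+x. ennreal (p x) \<partial>M) = (\<integral>\<^sup>+x. 0 \<partial>M)"
      by (intro nn_integral_cong_AE) auto
    then show False using p1 by simp
  qed
  have Zpos: "Z > 0" using Z0 by (simp add: zero_less_iff_neq_zero)
  have qeq: "ennreal (q x) = ennreal (p x) * expneg (\<gamma> x) / Z" if "x \<in> space M" for x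
  proof -
    have "expneg (\<gamma> x) \<noteq> \<infinity>" using expneg_le1[of "\<gamma> x"] by (auto simp: top_unique)
    then have "ennreal (p x) * expneg (\<gamma> x) \<noteq> \<infinity>" by (simp add: ennreal_mult_eq_top_iff)
    then have "ennreal (p x) * expneg (\<gamma> x) / Z \<noteq> \<infinity>" using Z0 Ztop
      by (simp add: ennreal_divide_eq_top_iff)
    then show ?thesis using qdef[OF that] unfolding Z_def[symmetric]
      by (simp add: less_top)
  qed
  have LQ: "(\<integral>\<^sup>+x. ennreal (q x) * \<gamma> x \<partial>M) = X / Z"
  proof -
    have "(\<integral>\<^sup>+x. ennreal (q x) * \<gamma> x \<partial>M) = (\<integral>\<^sup>+x. ennreal (p x) * expneg (\<gamma> x) * \<gamma> x / Z \<partial>M)"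
      by (intro nn_integral_cong) (simp add: qeq divide_ennreal_def ac_simps)
    also have "\<dots> = X / Z" unfolding X_def by (rule nn_integral_divide) simp
    finally show ?thesis .
  qed
  define K where "K = C * expneg C"
  have Ktop: "K \<noteq> \<infinity>" unfolding K_def C_def using c0
    by (simp add: expneg_ennreal ennreal_mult[symmetric])
  define f where "f x = ennreal (p x) * (\<gamma> x * expneg (\<gamma> x) + K)" for x
  define g where "g x = ennreal (p x) * (C * expneg (\<gamma> x) + \<gamma> x * expneg C)" for x
  have fm[measurable]: "f \<in> borel_measurable M" unfolding f_def by measurable
  have gm[measurable]: "g \<in> borel_measurable M" unfolding g_def by measurable
  have intf: "(\<integral>\<^sup>+x. f x \<partial>M) = X + K"
  proof -
    have "(\<integral>\<^sup>+x. f x \<partial>M) = (\<integral>\<^sup>+x. ennreal (p x) * expneg (\<gamma> x) * \<gamma> x + ennreal (p x) * K \<partial>M)"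
      unfolding f_def by (intro nn_integral_cong) (simp add: distrib_left ac_simps)
    also have "\<dots> = X + (\<integral>\<^sup>+x. ennreal (p x) * K \<partial>M)"
      unfolding X_def by (rule nn_integral_add) auto
    also have "(\<integral>\<^sup>+x. ennreal (p x) * K \<partial>M) = K"
      by (subst nn_integral_multc) (auto simp: p1)
    finally show ?thesis .
  qed
  have intg: "(\<integral>\<^sup>+x. g x \<partial>M) = C * Z + K"
  proof -
    have "(\<integral>\<^sup>+x. g x \<partial>M) = (\<integral>\<^sup>+x. C * (ennreal (p x) * expneg (\<gamma> x)) + (ennreal (p x) * \<gamma> x) * expneg C \<partial>M)"
      unfolding g_def by (intro nn_integral_cong) (simp add: distrib_left ac_simps)
    also have "\<dots> = (\<integral>\<^sup>+x. C * (ennreal (p x) * expneg (\<gamma> x)) \<partial>M) + (\<integral>\<^sup>+x. (ennreal (p x) * \<gamma> x) * expneg C \<partial>M)"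
      by (rule nn_integral_add) auto
    also have "(\<integral>\<^sup>+x. C * (ennreal (p x) * expneg (\<gamma> x)) \<partial>M) = C * Z"
      unfolding Z_def by (rule nn_integral_cmult) simp
    also have "(\<integral>\<^sup>+x. (ennreal (p x) * \<gamma> x) * expneg C \<partial>M) = A * expneg C"
      unfolding A_def by (rule nn_integral_multc) simp
    finally show ?thesis unfolding AC K_def .
  qed
  have fg: "f x \<le> g x" for x
    unfolding f_def g_def K_def C_def by (intro mult_left_mono pw(1)[OF c0]) auto
  have "(\<integral>\<^sup>+x. f x \<partial>M) \<le> (\<integral>\<^sup>+x. g x \<partial>M)" by (intro nn_integral_mono fg)
  then have "X + K \<le> C * Z + K" using intf intg by simp
  then have XCZ: "X \<le> C * Z" using Ktop by (simp add: add.commute[of _ K] ennreal_add_left_cancel_le)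
  have "X / Z \<le> C" using XCZ by (intro divide_le_posI_ennreal[OF Zpos]) (metis mult.commute)
  then show "(\<integral>\<^sup>+x. ennreal (q x) * \<gamma> x \<partial>M) \<le> (\<integral>\<^sup>+x. ennreal (p x) * \<gamma> x \<partial>M)"
    using LQ AC A_def by simp
  assume chg: "\<not> (AE x in M. q x = p x)"
  have "\<not> (AE x in M. g x \<le> f x)"
  proof
    assume H: "AE x in M. g x \<le> f x"
    have H2: "AE x in M. ennreal (p x) * expneg (\<gamma> x) = ennreal (p x) * expneg C"
      using H
    proof eventually_elim
      case (elim x)
      show ?case
      proof (cases "ennreal (p x) = 0")
        case False
        have "\<gamma> x = C"
        proof (rule ccontr)
          assume "\<gamma> x \<noteq> C"
          then have "\<gamma> x * expneg (\<gamma> x) + K < C * expneg (\<gamma> x) + \<gamma> x * expneg C"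
            unfolding K_def C_def using pw(2)[OF c0] by (simp add: C_def)
          then have "f x < g x" unfolding f_def g_def
            using False by (intro ennreal_mult_strict_left_mono) (auto simp: zero_less_iff_neq_zero)
          then show False using elim by simp
        qed
        then show ?thesis by simp
      qed simp
    qed
    have eC0: "expneg C \<noteq> 0" "expneg C \<noteq> \<infinity>"
      unfolding C_def using c0 by (auto simp: expneg_ennreal)
    have "Z = (\<integral>\<^sup>+x. ennreal (p x) * expneg C \<partial>M)"
      unfolding Z_def by (intro nn_integral_cong_AE H2)
    also have "\<dots> = expneg C" by (subst nn_integral_multc) (auto simp: p1)
    finally have ZC: "Z = expneg C" .
    have "AE x in M. q x = p x"
      using H2
    proof (rule AE_mp, intro AE_I2 impI)
      fix x assume x: "x \<in> space M" and e: "ennreal (p x) * expneg (\<gamma> x) = ennreal (p x) * expneg C"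
      have "q x = enn2real (ennreal (p x) * expneg C / expneg C)"
        using qdef[OF x] e unfolding Z_def[symmetric] ZC by simp
      also have "\<dots> = p x" using eC0 pnn[OF x] by (simp add: ennreal_mult_divide_eq)
      finally show "q x = p x" .
    qed
    then show False using chg by simp
  qed
  moreover have "(\<integral>\<^sup>+x. f x \<partial>M) \<noteq> \<infinity>"
    using intf XCZ Ktop Ztop by (auto simp: C_def ennreal_mult_eq_top_iff top_unique)
  ultimately have "(\<integral>\<^sup>+x. f x \<partial>M) < (\<integral>\<^sup>+x. g x \<partial>M)"
    by (intro nn_integral_less) (auto intro: fg)
  then have "X + K < C * Z + K" using intf intg by simp
  then have XCZ': "X < C * Z" using Ktop by (simp add: add.commute[of _ K] ennreal_add_left_cancel_less)
  have "X / Z < C" using Z0 Ztop XCZ' by (simp add: divide_less_ennreal less_top)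
  then show "(\<integral>\<^sup>+x. ennreal (q x) * \<gamma> x \<partial>M) < (\<integral>\<^sup>+x. ennreal (p x) * \<gamma> x \<partial>M)"
    using LQ AC A_def by simp
qed




lemma pair_split:
  fixes T :: "nat \<Rightarrow> nat \<Rightarrow> 'b::comm_monoid_add"
  assumes "i \<le> n"
  shows "(\<Sum>a\<in>{0..n}. \<Sum>b\<in>{a+1..n}. T a b) =
    (\<Sum>a\<in>{0..n}-{i}. \<Sum>b\<in>{a+1..n}-{i}. T a b) + (\<Sum>a\<in>{0..<i}. T a i) + (\<Sum>b\<in>{i+1..n}. T i b)"
proof -
  have 1: "(\<Sum>a\<in>{0..n}. \<Sum>b\<in>{a+1..n}. T a b) = (\<Sum>b\<in>{i+1..n}. T i b) + (\<Sum>a\<in>{0..n}-{i}. \<Sum>b\<in>{a+1..n}. T a b)"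
    using assms by (subst sum.remove[of _ i]) auto
  have 2: "(\<Sum>b\<in>{a+1..n}. T a b) = (if a < i then T a i else 0) + (\<Sum>b\<in>{a+1..n}-{i}. T a b)"
    if "a \<in> {0..n}-{i}" for a
  proof (cases "a < i")
    case True
    then show ?thesis using assms by (subst sum.remove[of _ i]) auto
  next
    case False
    then have "{a+1..n}-{i} = {a+1..n}" by auto
    then show ?thesis using False by simp
  qed
  have 3: "(\<Sum>a\<in>{0..n}-{i}. if a < i then T a i else 0) = (\<Sum>a\<in>{0..<i}. T a i)"
  proof -
    have "(\<Sum>a\<in>{0..n}-{i}. if a < i then T a i else 0) = (\<Sum>a\<in>{a\<in>{0..n}-{i}. a < i}. T a i)"
      by (rule sum.inter_filter[symmetric]) simp
    also have "{a\<in>{0..n}-{i}. a < i} = {0..<i}" using assms by auto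
    finally show ?thesis .
  qed
  have "(\<Sum>a\<in>{0..n}-{i}. \<Sum>b\<in>{a+1..n}. T a b) =
      (\<Sum>a\<in>{0..n}-{i}. (if a < i then T a i else 0) + (\<Sum>b\<in>{a+1..n}-{i}. T a b))"
    by (rule sum.cong) (auto simp only: 2)
  also have "\<dots> = (\<Sum>a\<in>{0..<i}. T a i) + (\<Sum>a\<in>{0..n}-{i}. \<Sum>b\<in>{a+1..n}-{i}. T a b)"
    by (simp only: sum.distrib 3)
  finally show ?thesis unfolding 1 by (simp add: ac_simps)
qed

context
  fixes \<psi> :: "'a::euclidean_space \<Rightarrow> 'a \<Rightarrow> real" and F :: "'a set"
  assumes F_meas[measurable]: "F \<in> sets lborel"
    and psi_meas: "(\<lambda>(f, g). \<psi> f g) \<in> borel_measurable (lborel \<Otimes>\<^sub>M lborel)"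
    and psi_nonneg: "\<And>f g. 0 \<le> \<psi> f g"
    and psi_sym: "\<And>f g. \<psi> f g = \<psi> g f"
begin

lemma psi_meas'[measurable]: "(\<lambda>x. \<psi> (fst x) (snd x)) \<in> borel_measurable (lborel \<Otimes>\<^sub>M lborel)"
  using psi_meas by (simp add: split_beta')

lemma G_meas[measurable]:
  assumes [measurable]: "q \<in> borel_measurable lborel"
  shows "(\<lambda>f. \<integral>\<^sup>+g\<in>F. ennreal (\<psi> f g * q g) \<partial>lborel) \<in> borel_measurable lborel"
  by measurable

lemma psi_slice[measurable]: "(\<lambda>g. \<psi> f g) \<in> borel_measurable lborel"
  using measurable_Pair2[OF psi_meas', of f] by simp

lemma coll_a:
  assumes [measurable]: "p \<in> borel_measurable lborel" "q \<in> borel_measurable lborel"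
    and pn: "\<And>x. 0 \<le> p x" and qn: "\<And>x. 0 \<le> q x"
  shows "coll \<psi> F p q = (\<integral>\<^sup>+f\<in>F. ennreal (p f) * (\<integral>\<^sup>+g\<in>F. ennreal (\<psi> f g * q g) \<partial>lborel) \<partial>lborel)"
  unfolding coll_def
proof (intro nn_integral_cong)
  fix f
  have "(\<integral>\<^sup>+g. ennreal (\<psi> f g * p f * q g) * indicator F g \<partial>lborel)
      = (\<integral>\<^sup>+g. ennreal (p f) * (ennreal (\<psi> f g * q g) * indicator F g) \<partial>lborel)"
  proof (intro nn_integral_cong)
    fix g
    have "ennreal (\<psi> f g * p f * q g) = ennreal (p f * (\<psi> f g * q g))" by (simp add: ac_simps)
    also have "\<dots> = ennreal (p f) * ennreal (\<psi> f g * q g)"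
      by (rule ennreal_mult[OF pn mult_nonneg_nonneg[OF psi_nonneg qn]])
    finally show "ennreal (\<psi> f g * p f * q g) * indicator F g = ennreal (p f) * (ennreal (\<psi> f g * q g) * indicator F g)"
      by (simp add: ac_simps)
  qed
  also have "\<dots> = ennreal (p f) * (\<integral>\<^sup>+g. ennreal (\<psi> f g * q g) * indicator F g \<partial>lborel)"
    by (rule nn_integral_cmult) measurable
  finally show "(\<integral>\<^sup>+g. ennreal (\<psi> f g * p f * q g) * indicator F g \<partial>lborel) * indicator F f =
     ennreal (p f) * (\<integral>\<^sup>+g. ennreal (\<psi> f g * q g) * indicator F g \<partial>lborel) * indicator F f"
    by simp
qed

lemma coll_swap:
  assumes [measurable]: "p \<in> borel_measurable lborel" "q \<in> borel_measurable lborel"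
  shows "coll \<psi> F p q = coll \<psi> F q p"
proof -
  have "coll \<psi> F p q = (\<integral>\<^sup>+f. \<integral>\<^sup>+g. ennreal (\<psi> f g * p f * q g) * indicator F g * indicator F f \<partial>lborel \<partial>lborel)"
    unfolding coll_def
  proof (intro nn_integral_cong)
    fix f
    show "(\<integral>\<^sup>+g. ennreal (\<psi> f g * p f * q g) * indicator F g \<partial>lborel) * indicator F f =
      (\<integral>\<^sup>+g. ennreal (\<psi> f g * p f * q g) * indicator F g * indicator F f \<partial>lborel)"
      by (rule nn_integral_multc[symmetric]) measurable
  qed
  also have "\<dots> = (\<integral>\<^sup>+g. \<integral>\<^sup>+f. ennreal (\<psi> f g * p f * q g) * indicator F g * indicator F f \<partial>lborel \<partial>lborel)"
    by (rule lborel_pair.Fubini'[symmetric]) measurable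
  also have "\<dots> = coll \<psi> F q p"
    unfolding coll_def
  proof (intro nn_integral_cong)
    fix g
    have "(\<integral>\<^sup>+f. ennreal (\<psi> f g * p f * q g) * indicator F g * indicator F f \<partial>lborel)
       = (\<integral>\<^sup>+f. ennreal (\<psi> g f * q g * p f) * indicator F f * indicator F g \<partial>lborel)"
      by (intro nn_integral_cong) (simp add: psi_sym[of _ g] ac_simps)
    also have "\<dots> = (\<integral>\<^sup>+f. ennreal (\<psi> g f * q g * p f) * indicator F f \<partial>lborel) * indicator F g"
      by (rule nn_integral_multc) measurable
    finally show "(\<integral>\<^sup>+f. ennreal (\<psi> f g * p f * q g) * indicator F g * indicator F f \<partial>lborel)
       = (\<integral>\<^sup>+f. ennreal (\<psi> g f * q g * p f) * indicator F f \<partial>lborel) * indicator F g" .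
  qed
  finally show ?thesis .
qed


lemma decomp:
  assumes Pm[measurable]: "\<And>j. j \<le> n \<Longrightarrow> P j \<in> borel_measurable lborel"
    and Pn: "\<And>j x. 0 \<le> P j x" and i: "i \<le> n"
  shows "Jc \<psi> F n P = (\<Sum>a\<in>{0..n}-{i}. \<Sum>b\<in>{a+1..n}-{i}. coll \<psi> F (P a) (P b))
     + (\<integral>\<^sup>+f\<in>F. ennreal (P i f) * gamma_bar \<psi> F n P P i f \<partial>lborel)"
proof -
  define G where "G j f = (\<integral>\<^sup>+g\<in>F. ennreal (\<psi> f g * P j g) \<partial>lborel)" for j f
  define H where "H j f = ennreal (P i f) * G j f * indicator F f" for j f
  have Hm: "H j \<in> borel_measurable lborel" if "j \<le> n" for j
    unfolding H_def G_def using that i by measurable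
  have s1: "(\<Sum>a\<in>{0..<i}. coll \<psi> F (P a) (P i)) = (\<Sum>a\<in>{0..<i}. \<integral>\<^sup>+f. H a f \<partial>lborel)"
  proof (rule sum.cong)
    fix a assume "a \<in> {0..<i}"
    then have a: "a \<le> n" using i by auto
    show "coll \<psi> F (P a) (P i) = (\<integral>\<^sup>+f. H a f \<partial>lborel)"
      unfolding H_def G_def
      by (subst coll_swap) (use a i Pn in \<open>auto intro!: coll_a\<close>)
  qed simp
  have s2: "(\<Sum>b\<in>{i+1..n}. coll \<psi> F (P i) (P b)) = (\<Sum>b\<in>{i+1..n}. \<integral>\<^sup>+f. H b f \<partial>lborel)"
  proof (rule sum.cong)
    fix b assume "b \<in> {i+1..n}"
    then have b: "b \<le> n" by auto
    show "coll \<psi> F (P i) (P b) = (\<integral>\<^sup>+f. H b f \<partial>lborel)"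
      unfolding H_def G_def using b i Pn by (auto intro!: coll_a)
  qed simp
  have "(\<Sum>a\<in>{0..<i}. \<integral>\<^sup>+f. H a f \<partial>lborel) + (\<Sum>b\<in>{i+1..n}. \<integral>\<^sup>+f. H b f \<partial>lborel)
      = (\<integral>\<^sup>+f. (\<Sum>a\<in>{0..<i}. H a f) \<partial>lborel) + (\<integral>\<^sup>+f. (\<Sum>b\<in>{i+1..n}. H b f) \<partial>lborel)"
    using i Hm by (subst (1 2) nn_integral_sum) (auto simp: measurable_lborel1)
  also have "\<dots> = (\<integral>\<^sup>+f. (\<Sum>a\<in>{0..<i}. H a f) + (\<Sum>b\<in>{i+1..n}. H b f) \<partial>lborel)"
    using i Hm by (intro nn_integral_add[symmetric]) (auto intro!: borel_measurable_sum)
  also have "\<dots> = (\<integral>\<^sup>+f\<in>F. ennreal (P i f) * gamma_bar \<psi> F n P P i f \<partial>lborel)"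
    by (intro nn_integral_cong)
       (simp add: H_def G_def gamma_bar_def sum_distrib_left sum_distrib_right distrib_left distrib_right)
  finally have s3: "(\<Sum>a\<in>{0..<i}. \<integral>\<^sup>+f. H a f \<partial>lborel) + (\<Sum>b\<in>{i+1..n}. \<integral>\<^sup>+f. H b f \<partial>lborel)
      = (\<integral>\<^sup>+f\<in>F. ennreal (P i f) * gamma_bar \<psi> F n P P i f \<partial>lborel)" .
  show ?thesis
    unfolding Jc_def pair_split[OF i] s1 s2 add.assoc s3 ..
qed

end



lemma gamma_cong:
  assumes "\<And>j g. j \<le> n \<Longrightarrow> g \<in> F \<Longrightarrow> P j g = P' j g"
    and "\<And>j g. j \<le> n \<Longrightarrow> g \<in> F \<Longrightarrow> Q j g = Q' j g"
    and "i \<le> n"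
  shows "gamma_bar \<psi> F n P Q i f = gamma_bar \<psi> F n P' Q' i f"
  unfolding gamma_bar_def using assms
  by (auto intro!: sum.cong arg_cong2[where f="(+)"] nn_integral_cong simp: indicator_def)

lemma Jc_cong:
  assumes "\<And>j g. j \<le> n \<Longrightarrow> g \<in> F \<Longrightarrow> P j g = P' j g"
  shows "Jc \<psi> F n P = Jc \<psi> F n P'"
  unfolding Jc_def coll_def using assms
  by (auto intro!: sum.cong nn_integral_cong simp: indicator_def)

lemma gamma_meas:
  fixes \<psi> :: "'a::euclidean_space \<Rightarrow> 'a \<Rightarrow> real"
  assumes F_meas: "F \<in> sets lborel"
    and psi_meas: "(\<lambda>(f, g). \<psi> f g) \<in> borel_measurable (lborel \<Otimes>\<^sub>M lborel)"
    and psi_nonneg: "\<And>f g. 0 \<le> \<psi> f g"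
    and psi_sym: "\<And>f g. \<psi> f g = \<psi> g f"
    and "\<And>j. j < i \<Longrightarrow> P j \<in> borel_measurable lborel"
    and "\<And>j. i < j \<Longrightarrow> j \<le> n \<Longrightarrow> Q j \<in> borel_measurable lborel"
  shows "(\<lambda>f. gamma_bar \<psi> F n P Q i f) \<in> borel_measurable lborel"
proof -
  note G = G_meas[OF F_meas psi_meas psi_nonneg psi_sym]
  have 1: "(\<lambda>f. \<Sum>j\<in>{0..<i}. \<integral>\<^sup>+g\<in>F. ennreal (\<psi> f g * P j g) \<partial>lborel) \<in> borel_measurable lborel"
    by (rule borel_measurable_sum, rule G, rule assms(5)) auto
  have 2: "(\<lambda>f. \<Sum>j\<in>{i+1..n}. \<integral>\<^sup>+g\<in>F. ennreal (\<psi> f g * Q j g) \<partial>lborel) \<in> borel_measurable lborel"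
    by (rule borel_measurable_sum, rule G, rule assms(6)) auto
  show ?thesis unfolding gamma_bar_def using 1 2 by (rule borel_measurable_add)
qed


lemma testm1:
  fixes p :: "'a::euclidean_space \<Rightarrow> real"
  assumes [measurable]: "p \<in> borel_measurable lborel" "F \<in> sets lborel"
  shows "(\<lambda>g. if g \<in> F then max 0 (p g) else 0) \<in> borel_measurable lborel"
proof -
  have 6: "F \<inter> space lborel \<in> sets lborel" by (metis assms(2) sets.Int_space_eq2)
  have 5: "(\<lambda>g. max 0 (p g)) \<in> borel_measurable lborel"
    by (rule borel_measurable_max[OF assms(1) borel_measurable_const])
  show ?thesis by (rule measurable_If_set[OF 5 borel_measurable_const 6])
qed

lemma testm2:
  fixes p :: "'a \<Rightarrow> real" and \<gamma> :: "'a \<Rightarrow> ennreal"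
  assumes [measurable]: "p \<in> borel_measurable M" "F \<in> sets M" "\<gamma> \<in> borel_measurable M"
  shows "(\<lambda>g. if g \<in> F then enn2real (ennreal (p g) * expneg (\<gamma> g) / Z) else 0) \<in> borel_measurable M"
proof -
  have 1: "(\<lambda>g. expneg (\<gamma> g)) \<in> borel_measurable M" by (rule measurable_compose[OF assms(3) expneg_meas])
  have 2: "(\<lambda>g. ennreal (p g)) \<in> borel_measurable M" by (rule measurable_compose[OF assms(1) measurable_ennreal])
  have 3: "(\<lambda>g. ennreal (p g) * expneg (\<gamma> g)) \<in> borel_measurable M" by (rule borel_measurable_times_ennreal[OF 2 1])
  have 4: "(\<lambda>g. ennreal (p g) * expneg (\<gamma> g) / Z) \<in> borel_measurable M"
    by (rule borel_measurable_divide_ennreal[OF 3 borel_measurable_const])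
  have 5: "(\<lambda>g. enn2real (ennreal (p g) * expneg (\<gamma> g) / Z)) \<in> borel_measurable M"
    by (rule borel_measurable_enn2real[OF 4])
  have 6: "F \<inter> space M \<in> sets M" by (metis assms(2) sets.Int_space_eq2)
  show ?thesis by (rule measurable_If_set[OF 5 borel_measurable_const 6])
qed

theorem theorem2:
  fixes \<psi> :: "real^'t^'d \<Rightarrow> real^'t^'d \<Rightarrow> real"
    and F :: "(real^'t^'d) set"
    and n :: nat
    and Pold Pnew :: "nat \<Rightarrow> real^'t^'d \<Rightarrow> real"
  assumes F_meas: "F \<in> sets lborel"
    and psi_meas: "(\<lambda>(f, g). \<psi> f g) \<in> borel_measurable (lborel \<Otimes>\<^sub>M lborel)"
    and psi_nonneg: "\<And>f g. 0 \<le> \<psi> f g"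
    and psi_sym: "\<And>f g. \<psi> f g = \<psi> g f"
    and dens: "\<And>i. i \<le> n \<Longrightarrow> is_density F (Pold i)"
    and update: "\<And>i f. i \<le> n \<Longrightarrow> f \<in> F \<Longrightarrow>
       Pnew i f = enn2real
         (ennreal (Pold i f) * expneg (gamma_bar \<psi> F n Pnew Pold i f)
          / (\<integral>\<^sup>+g\<in>F. ennreal (Pold i g) * expneg (gamma_bar \<psi> F n Pnew Pold i g) \<partial>lborel))"
    and changed: "\<exists>i\<le>n. \<not> (AE f in lborel. f \<in> F \<longrightarrow> Pnew i f = Pold i f)"
  shows "\<exists>\<xi>::real. \<xi> > 0 \<and> Jc \<psi> F n Pnew \<le> Jc \<psi> F n Pold - ennreal \<xi>"
proof -
  have Fs: "F \<inter> space lborel \<in> sets lborel" using F_meas by simp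
  have Pold_m: "Pold j \<in> borel_measurable lborel" if "j \<le> n" for j
    using dens[OF that] unfolding is_density_def by blast
  have Pold_nn: "0 \<le> Pold j f" if "j \<le> n" "f \<in> F" for j f
    using dens[OF that(1)] that(2) unfolding is_density_def by blast
  have Pold_1: "(\<integral>\<^sup>+f\<in>F. ennreal (Pold j f) \<partial>lborel) = 1" if "j \<le> n" for j
    using dens[OF that] unfolding is_density_def by blast
  define Z where "Z i = (\<integral>\<^sup>+g\<in>F. ennreal (Pold i g) * expneg (gamma_bar \<psi> F n Pnew Pold i g) \<partial>lborel)" for i
  have Pnew_nn: "0 \<le> Pnew j f" if "j \<le> n" "f \<in> F" for j f
    using update[OF that] by simp
  define Pr where "Pr j g = (if g \<in> F then max 0 (Pold j g) else 0)" for j g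
  define Nr where "Nr j g = (if g \<in> F then max 0 (Pnew j g) else 0)" for j g
  have Pr_eq: "Pr j g = Pold j g" if "j \<le> n" "g \<in> F" for j g
    using Pold_nn[OF that] that by (simp add: Pr_def)
  have Nr_eq: "Nr j g = Pnew j g" if "j \<le> n" "g \<in> F" for j g
    using Pnew_nn[OF that] that by (simp add: Nr_def)
  have Pr_nn: "0 \<le> Pr j g" for j g by (simp add: Pr_def)
  have Nr_nn: "0 \<le> Nr j g" for j g by (simp add: Nr_def)
  have Pr_m: "Pr j \<in> borel_measurable lborel" if "j \<le> n" for j
    unfolding Pr_def by (rule testm1[OF Pold_m[OF that] F_meas])
  define \<gamma> where "\<gamma> i f = gamma_bar \<psi> F n Nr Pr i f" for i f
  have \<gamma>_eq: "gamma_bar \<psi> F n Pnew Pold i f = \<gamma> i f" if "i \<le> n" for i f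
    unfolding \<gamma>_def by (rule gamma_cong) (use Nr_eq Pr_eq that in auto)
  have Nr_m: "Nr j \<in> borel_measurable lborel" if "j \<le> n" for j
    using that
  proof (induction j rule: less_induct)
    case (less i)
    have gm: "(\<lambda>f. \<gamma> i f) \<in> borel_measurable lborel"
      unfolding \<gamma>_def
    proof (rule gamma_meas[OF F_meas psi_meas psi_nonneg psi_sym])
      fix j assume "j < i" then show "Nr j \<in> borel_measurable lborel"
        using less.IH less.prems by (meson less_imp_le_nat order_trans)
    next
      fix j assume "i < j" "j \<le> n" show "Pr j \<in> borel_measurable lborel" by (rule Pr_m[OF \<open>j \<le> n\<close>])
    qed
    have eq: "Nr i = (\<lambda>g. if g \<in> F then enn2real (ennreal (Pold i g) * expneg (\<gamma> i g) / Z i) else 0)"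
    proof
      fix g show "Nr i g = (if g \<in> F then enn2real (ennreal (Pold i g) * expneg (\<gamma> i g) / Z i) else 0)"
        using Nr_eq[OF less.prems, of g] update[OF less.prems, of g] \<gamma>_eq[OF less.prems, of g]
        by (auto simp: Nr_def Z_def)
    qed
    show ?case unfolding eq by (rule testm2[OF Pold_m[OF less.prems] F_meas gm])
  qed
  have \<gamma>_m: "(\<lambda>f. \<gamma> i f) \<in> borel_measurable lborel" if "i \<le> n" for i
    unfolding \<gamma>_def
  proof (rule gamma_meas[OF F_meas psi_meas psi_nonneg psi_sym])
    fix j assume "j < i" then show "Nr j \<in> borel_measurable lborel" using that by (intro Nr_m) simp
  next
    fix j assume "i < j" "j \<le> n" show "Pr j \<in> borel_measurable lborel" by (rule Pr_m[OF \<open>j \<le> n\<close>])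
  qed
  define Q where "Q m j = (if j < m then Nr j else Pr j)" for m j
  have Q_m: "Q m j \<in> borel_measurable lborel" if "j \<le> n" for m j
  proof (cases "j < m")
    case True
    then have "Q m j = Nr j" by (simp add: Q_def)
    then show ?thesis using Nr_m[OF that] by metis
  next
    case False
    then have "Q m j = Pr j" by (simp add: Q_def)
    then show ?thesis using Pr_m[OF that] by metis
  qed
  have Q_nn: "0 \<le> Q m j x" for m j x
    using Nr_nn Pr_nn by (simp add: Q_def)
  have \<gamma>Q: "gamma_bar \<psi> F n (Q m) (Q m) i f = \<gamma> i f" if "i \<le> m" "m \<le> Suc i" for i m f
    unfolding gamma_bar_def \<gamma>_def using that
    by (auto intro!: sum.cong arg_cong2[where f="(+)"] nn_integral_cong simp: Q_def)
  let ?M = "restrict_space lborel F"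
  have spM: "space ?M = F" by (simp add: space_restrict_space)
  have stepF: "Jc \<psi> F n (Q (Suc i)) \<le> Jc \<psi> F n (Q i) \<and>
     (Jc \<psi> F n (Q i) < \<infinity> \<longrightarrow> \<not> (AE f in lborel. f \<in> F \<longrightarrow> Pnew i f = Pold i f) \<longrightarrow>
       Jc \<psi> F n (Q (Suc i)) < Jc \<psi> F n (Q i))" if i: "i \<le> n" for i
  proof -
    define R where "R = (\<Sum>a\<in>{0..n}-{i}. \<Sum>b\<in>{a+1..n}-{i}. coll \<psi> F (Q i a) (Q i b))"
    define A where "A = (\<integral>\<^sup>+f\<in>F. ennreal (Pr i f) * \<gamma> i f \<partial>lborel)"
    define B where "B = (\<integral>\<^sup>+f\<in>F. ennreal (Nr i f) * \<gamma> i f \<partial>lborel)"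
    have Qii: "Q i i = Pr i" "Q (Suc i) i = Nr i" by (auto simp: Q_def)
    have g1: "gamma_bar \<psi> F n (Q i) (Q i) i f = \<gamma> i f" for f using \<gamma>Q[of i i f] by simp
    have g2: "gamma_bar \<psi> F n (Q (Suc i)) (Q (Suc i)) i f = \<gamma> i f" for f using \<gamma>Q[of i "Suc i" f] by simp
    have D1: "Jc \<psi> F n (Q i) = R + (\<integral>\<^sup>+f\<in>F. ennreal (Q i i f) * gamma_bar \<psi> F n (Q i) (Q i) i f \<partial>lborel)"
      unfolding R_def by (rule decomp[OF F_meas psi_meas psi_nonneg psi_sym]) (erule Q_m, rule Q_nn, rule i)
    have JA: "Jc \<psi> F n (Q i) = R + A"
      unfolding D1 A_def Qii g1 ..
    have R2: "(\<Sum>a\<in>{0..n}-{i}. \<Sum>b\<in>{a+1..n}-{i}. coll \<psi> F (Q (Suc i) a) (Q (Suc i) b)) = R"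
      unfolding R_def by (intro sum.cong refl) (auto simp: Q_def)
    have D2: "Jc \<psi> F n (Q (Suc i)) = R + (\<integral>\<^sup>+f\<in>F. ennreal (Q (Suc i) i f) * gamma_bar \<psi> F n (Q (Suc i)) (Q (Suc i)) i f \<partial>lborel)"
      unfolding R2[symmetric] by (rule decomp[OF F_meas psi_meas psi_nonneg psi_sym]) (erule Q_m, rule Q_nn, rule i)
    have JB: "Jc \<psi> F n (Q (Suc i)) = R + B"
      unfolding D2 B_def Qii g2 ..
    show ?thesis
    proof (cases "A = \<infinity>")
      case True
      then show ?thesis using JA by simp
    next
      case False
      have Ar: "A = (\<integral>\<^sup>+x. ennreal (Pr i x) * \<gamma> i x \<partial>?M)"
        unfolding A_def by (rule nn_integral_restrict_space[OF Fs, symmetric])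
      have Br: "B = (\<integral>\<^sup>+x. ennreal (Nr i x) * \<gamma> i x \<partial>?M)"
        unfolding B_def by (rule nn_integral_restrict_space[OF Fs, symmetric])
      have p1: "(\<integral>\<^sup>+x. ennreal (Pr i x) \<partial>?M) = 1"
      proof -
        have "(\<integral>\<^sup>+x. ennreal (Pr i x) \<partial>?M) = (\<integral>\<^sup>+x\<in>F. ennreal (Pr i x) \<partial>lborel)"
          by (rule nn_integral_restrict_space[OF Fs])
        also have "\<dots> = (\<integral>\<^sup>+x\<in>F. ennreal (Pold i x) \<partial>lborel)"
          by (intro nn_integral_cong) (simp add: Pr_eq[OF i] indicator_def)
        finally show ?thesis using Pold_1[OF i] by simp
      qed
      have Zr: "Z i = (\<integral>\<^sup>+y. ennreal (Pr i y) * expneg (\<gamma> i y) \<partial>?M)"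
      proof -
        have "(\<integral>\<^sup>+y. ennreal (Pr i y) * expneg (\<gamma> i y) \<partial>?M) = (\<integral>\<^sup>+y\<in>F. ennreal (Pr i y) * expneg (\<gamma> i y) \<partial>lborel)"
          by (rule nn_integral_restrict_space[OF Fs])
        also have "\<dots> = Z i"
          unfolding Z_def by (intro nn_integral_cong) (simp add: Pr_eq[OF i] \<gamma>_eq[OF i] indicator_def)
        finally show ?thesis by simp
      qed
      have qdef: "Nr i x = enn2real (ennreal (Pr i x) * expneg (\<gamma> i x)
                   / (\<integral>\<^sup>+y. ennreal (Pr i y) * expneg (\<gamma> i y) \<partial>?M))" if "x \<in> space ?M" for x
        using that Nr_eq[OF i, of x] update[OF i, of x] Pr_eq[OF i, of x] \<gamma>_eq[OF i, of x]
        unfolding spM Zr[symmetric] Z_def by simp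
      have pm: "Pr i \<in> borel_measurable ?M" by (rule measurable_restrict_space1[OF Pr_m[OF i]])
      have gm: "(\<lambda>f. \<gamma> i f) \<in> borel_measurable ?M" by (rule measurable_restrict_space1[OF \<gamma>_m[OF i]])
      have pnn: "\<And>x. x \<in> space ?M \<Longrightarrow> 0 \<le> Pr i x" using Pr_nn by simp
      have Afin: "(\<integral>\<^sup>+x. ennreal (Pr i x) * \<gamma> i x \<partial>?M) < \<infinity>" using False Ar by (simp add: less_top)
      note DS = descent[of "Pr i" ?M "\<lambda>f. \<gamma> i f" "Nr i", OF pm gm pnn p1 Afin qdef]
      have BA: "B \<le> A" using DS(1) Ar Br by simp
      show ?thesis
      proof (intro conjI impI)
        show "Jc \<psi> F n (Q (Suc i)) \<le> Jc \<psi> F n (Q i)" unfolding JA JB using BA by (rule add_left_mono)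
        assume fin: "Jc \<psi> F n (Q i) < \<infinity>" and chg: "\<not> (AE f in lborel. f \<in> F \<longrightarrow> Pnew i f = Pold i f)"
        have "\<not> (AE x in ?M. Nr i x = Pr i x)"
        proof
          assume "AE x in ?M. Nr i x = Pr i x"
          then have "AE x in lborel. x \<in> F \<longrightarrow> Nr i x = Pr i x" by (simp add: AE_restrict_space_iff[OF Fs])
          then have "AE f in lborel. f \<in> F \<longrightarrow> Pnew i f = Pold i f"
            by eventually_elim (use Nr_eq[OF i] Pr_eq[OF i] in auto)
          then show False using chg by simp
        qed
        then have "B < A" using DS(2) Ar Br by simp
        moreover have "R \<noteq> \<infinity>" using fin JA by (auto simp: top_unique)
        ultimately show "Jc \<psi> F n (Q (Suc i)) < Jc \<psi> F n (Q i)" unfolding JA JB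
          by (simp add: ennreal_add_left_cancel_less)
      qed
    qed
  qed
  define J where "J m = Jc \<psi> F n (Q m)" for m
  have J0: "J 0 = Jc \<psi> F n Pold"
    unfolding J_def by (rule Jc_cong) (simp add: Q_def Pr_eq)
  have JN: "J (Suc n) = Jc \<psi> F n Pnew"
    unfolding J_def by (rule Jc_cong) (simp add: Q_def Nr_eq)
  have mono: "J m \<le> J k" if "k \<le> m" "m \<le> Suc n" for k m
    using that
  proof (induction m rule: dec_induct)
    case base then show ?case by simp
  next
    case (step m)
    then have m: "m \<le> n" by simp
    have "J (Suc m) \<le> J m" using stepF[OF m] unfolding J_def by blast
    then show ?case using step by (meson Suc_leD order_trans)
  qed
  obtain i0 where i0: "i0 \<le> n" "\<not> (AE f in lborel. f \<in> F \<longrightarrow> Pnew i0 f = Pold i0 f)"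
    using changed by blast
  show ?thesis
  proof (cases "J 0 = \<infinity>")
    case True
    then show ?thesis using J0 by (intro exI[of _ 1]) simp
  next
    case False
    have "J i0 \<le> J 0" using mono[of 0 i0] i0 by simp
    then have fin: "J i0 < \<infinity>" using False by (auto simp: less_top[symmetric] top_unique)
    have "J (Suc i0) < J i0" using stepF[OF i0(1)] fin i0(2) unfolding J_def by simp
    moreover have "J (Suc n) \<le> J (Suc i0)" using mono[of "Suc i0" "Suc n"] i0 by simp
    ultimately have lt: "J (Suc n) < J 0" using \<open>J i0 \<le> J 0\<close> by simp
    define a where "a = enn2real (J 0)"
    define b where "b = enn2real (J (Suc n))"
    have Ja: "J 0 = ennreal a" unfolding a_def using False by (simp add: less_top)
    have Jb: "J (Suc n) = ennreal b" unfolding b_def using lt by (simp add: order_less_le_trans[OF lt top_greatest])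
    have b0: "0 \<le> b" unfolding b_def by simp
    have ba: "b < a" using lt b0 unfolding Ja Jb by (simp add: ennreal_less_iff)
    have "J 0 - ennreal (a - b) = ennreal b" unfolding Ja using ba b0 by (simp add: ennreal_minus)
    then show ?thesis using ba J0 JN Jb by (intro exI[of _ "a - b"]) simp
  qed
qed

end
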